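(* Let $\mathcal G$ be a connected noncompact metric graph and consider the critical energy ($p=6$). Then: (i) if $\mu\le\mu_{\mathcal G}$, then $\mathcal E_{\mathcal G}(\mu)=0$, and it is not attained when $\mu<\mu_{\mathcal G}$; (ii) if $\mu>\mu_{\mathcal G}$, then $\mathcal E_{\mathcal G}(\mu)<0$ (possibly $-\infty$); (iii) if $\mu>\mu_{\mathbb R}$, then $\mathcal E_{\mathcal G}(\mu)=-\infty$.
   Context: Metric graphs have finitely many edges and vertices, bounded edges identified with $[0,\ell_e]$ and halflines with $[0,\infty)$; noncompact means at least one halfline. $H^1(\mathcal G)$: continuous functions on $\mathcal G$, $H^1$ on each edge; $H^1_\mu(\mathcal G)$ those with $\|u\|_{L^2(\mathcal G)}^2=\mu$. $E(u,\mathcal G)=\frac12\int_{\mathcal G}|u'|^2-\frac16\int_{\mathcal G}|u|^6$ and $\mathcal E_{\mathcal G}(\mu)=\inf_{H^1_\mu(\mathcal G)}E(\cdot,\mathcal G)$. $K_{\mathcal G}=\sup_{u\in H^1(\mathcal G),u\ne0}\frac{\|u\|_6^6}{\|u\|_2^4\|u'\|_2^2}$ is the best Gagliardo–Nirenberg constant on $\mathcal G$, and the critical mass is $\mu_{\mathcal G}=\sqrt{3/K_{\mathcal G}}$; in particular $\mu_{\mathbb R}=\sqrt{3/K_{\mathbb R}}=\pi\sqrt3/2$. *)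

theory Defs
  imports "HOL-Analysis.Analysis"
begin

text \<open>Vertices are 0..<n_vert; bounded edges are 0..<n_bdd, edge e joins vertex
  b_src e (at coordinate 0) to vertex b_tgt e (at coordinate b_len e),
  identified with [0, b_len e]; halflines are 0..<n_half, halfline j is
  identified with [0,\<infinity>) and attached at coordinate 0 to vertex h_vert j.
  Multiple edges and self-loops are allowed.\<close>

record mgraph =
  n_vert :: nat
  n_bdd  :: nat
  b_len  :: "nat \<Rightarrow> real"
  b_src  :: "nat \<Rightarrow> nat"
  b_tgt  :: "nat \<Rightarrow> nat"
  n_half :: nat
  h_vert :: "nat \<Rightarrow> nat"

definition wf_mgraph :: "mgraph \<Rightarrow> bool" where
  "wf_mgraph G \<longleftrightarrow>
     (\<forall>e<n_bdd G. 0 < b_len G e \<and> b_src G e < n_vert G \<and> b_tgt G e < n_vert G) \<and>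
     (\<forall>j<n_half G. h_vert G j < n_vert G)"

definition edges :: "mgraph \<Rightarrow> (nat + nat) set" where
  "edges G = Inl ` {..<n_bdd G} \<union> Inr ` {..<n_half G}"

definition edom :: "mgraph \<Rightarrow> nat + nat \<Rightarrow> real set" where
  "edom G k = (case k of Inl e \<Rightarrow> {0..b_len G e} | Inr j \<Rightarrow> {0..})"

definition adj :: "mgraph \<Rightarrow> (nat \<times> nat) set" where
  "adj G = {(b_src G e, b_tgt G e) | e. e < n_bdd G} \<union> {(b_tgt G e, b_src G e) | e. e < n_bdd G}"

definition connected_mgraph :: "mgraph \<Rightarrow> bool" where
  "connected_mgraph G \<longleftrightarrow> (\<forall>v<n_vert G. \<forall>w<n_vert G. (v, w) \<in> (adj G)\<^sup>*)"

definition noncompact_mgraph :: "mgraph \<Rightarrow> bool" where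
  "noncompact_mgraph G \<longleftrightarrow> 0 < n_half G"

text \<open>A function on the graph is a family u k of real functions on the edges (only the
  values on edom G k matter). u is in H^1(G) with derivative g (g is a weak derivative,
  determined a.e.) if on each edge u, g are square integrable and u is the integral of g
  (i.e. u is absolutely continuous with u' = g a.e.), and u is continuous at vertices.\<close>

definition H1_edge :: "real set \<Rightarrow> (real \<Rightarrow> real) \<Rightarrow> (real \<Rightarrow> real) \<Rightarrow> bool" where
  "H1_edge D f g \<longleftrightarrow>
     set_integrable lborel D (\<lambda>x. (f x)\<^sup>2) \<and> set_integrable lborel D (\<lambda>x. (g x)\<^sup>2) \<and>
     (\<forall>x\<in>D. set_integrable lborel {0..x} g \<and> f x = f 0 + (\<integral>t\<in>{0..x}. g t \<partial>lborel))"

definition H1 :: "mgraph \<Rightarrow> (nat + nat \<Rightarrow> real \<Rightarrow> real) \<Rightarrow> (nat + nat \<Rightarrow> real \<Rightarrow> real) \<Rightarrow> bool" where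
  "H1 G u g \<longleftrightarrow>
     (\<forall>k\<in>edges G. H1_edge (edom G k) (u k) (g k)) \<and>
     (\<exists>\<phi> :: nat \<Rightarrow> real.
        (\<forall>e<n_bdd G. u (Inl e) 0 = \<phi> (b_src G e) \<and> u (Inl e) (b_len G e) = \<phi> (b_tgt G e)) \<and>
        (\<forall>j<n_half G. u (Inr j) 0 = \<phi> (h_vert G j)))"

definition L2sq :: "mgraph \<Rightarrow> (nat + nat \<Rightarrow> real \<Rightarrow> real) \<Rightarrow> real" where
  "L2sq G u = (\<Sum>k\<in>edges G. \<integral>x\<in>edom G k. (u k x)\<^sup>2 \<partial>lborel)"

definition L6pow :: "mgraph \<Rightarrow> (nat + nat \<Rightarrow> real \<Rightarrow> real) \<Rightarrow> real" where
  "L6pow G u = (\<Sum>k\<in>edges G. \<integral>x\<in>edom G k. \<bar>u k x\<bar> ^ 6 \<partial>lborel)"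

definition energy :: "mgraph \<Rightarrow> (nat + nat \<Rightarrow> real \<Rightarrow> real) \<Rightarrow> (nat + nat \<Rightarrow> real \<Rightarrow> real) \<Rightarrow> real" where
  "energy G u g = L2sq G g / 2 - L6pow G u / 6"

definition ground_level :: "mgraph \<Rightarrow> real \<Rightarrow> ereal" where
  "ground_level G \<mu> = (INF ug \<in> {(u, g). H1 G u g \<and> L2sq G u = \<mu>}. ereal (energy G (fst ug) (snd ug)))"

definition ground_level_attained :: "mgraph \<Rightarrow> real \<Rightarrow> bool" where
  "ground_level_attained G \<mu> \<longleftrightarrow>
     (\<exists>u g. H1 G u g \<and> L2sq G u = \<mu> \<and> ereal (energy G u g) = ground_level G \<mu>)"

definition GN_const :: "mgraph \<Rightarrow> ereal" where
  "GN_const G = (SUP ug \<in> {(u, g). H1 G u g \<and> 0 < L2sq G u}.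
      ereal (L6pow G (fst ug) / ((L2sq G (fst ug))\<^sup>2 * L2sq G (snd ug))))"

definition crit_mass :: "mgraph \<Rightarrow> real" where
  "crit_mass G = sqrt (3 / real_of_ereal (GN_const G))"

end

theory Submission
  imports Defs "HOL-Real_Asymp.Real_Asymp"
begin


lemma cs: "(cosh (y::real))^2 = (sinh y)^2 + 1" by (simp add: cosh_square_eq)

lemma d_at: "((\<lambda>y::real. arctan (sinh y)) has_real_derivative 1 / cosh y) (at y)"
proof -
  have "1 + (sinh y)^2 = (cosh y)^2" using cs[of y] by simp
  then show ?thesis
    by (auto intro!: derivative_eq_intros simp: power2_eq_square field_simps)
qed

lemma d_t: "((\<lambda>y::real. sinh y / cosh y) has_real_derivative 1 / (cosh y)^2) (at y)"
proof -
  have "(cosh y)^2 - (sinh y)^2 = 1" using cs[of y] by simp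
  then show ?thesis
    by (auto intro!: derivative_eq_intros simp: power2_eq_square field_simps)
qed

lemma d_q: "((\<lambda>y::real. sinh y / (cosh y)^2) has_real_derivative 2 / (cosh y)^3 - 1 / cosh y) (at y)"
proof -
  have e: "(sinh y)^2 = (cosh y)^2 - 1" using cs[of y] by simp
  have "((\<lambda>y::real. sinh y / (cosh y)^2) has_real_derivative
      (cosh y * (cosh y)^2 - sinh y * (2 * cosh y * sinh y)) / ((cosh y)^2)^2) (at y)"
    by (auto intro!: derivative_eq_intros simp: power2_eq_square)
  moreover have "(cosh y * (cosh y)^2 - sinh y * (2 * cosh y * sinh y)) / ((cosh y)^2)^2
     = 2 / (cosh y)^3 - 1 / cosh y"
  proof -
    have "sinh y * (2 * cosh y * sinh y) = 2 * cosh y * ((cosh y)^2 - 1)"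
      using e by algebra
    then have "(cosh y * (cosh y)^2 - sinh y * (2 * cosh y * sinh y)) = 2 * cosh y - (cosh y)^3"
      by (simp add: algebra_simps power2_eq_square power3_eq_cube)
    then show ?thesis by (simp add: field_simps power2_eq_square power3_eq_cube power4_eq_xxxx)
  qed
  ultimately show ?thesis by simp
qed

lemma d_sc: "((\<lambda>y::real. sinh y * cosh y) has_real_derivative 2 * (cosh y)^2 - 1) (at y)"
proof -
  have e: "(sinh y)^2 = (cosh y)^2 - 1" using cs[of y] by simp
  show ?thesis
    by (rule derivative_eq_intros refl)+ (simp add: e[unfolded power2_eq_square] power2_eq_square)
qed

lemma d_s3: "((\<lambda>y::real. (sinh y)^3) has_real_derivative 3 * (cosh y)^3 - 3 * cosh y) (at y)"
proof -
  have e: "(sinh y)^2 = (cosh y)^2 - 1" using cs[of y] by simp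
  show ?thesis
    apply (rule derivative_eq_intros refl)+
    using e by (simp add: numeral_eq_Suc) (simp add: algebra_simps)
qed

definition at1 :: "real \<Rightarrow> real" where "at1 y = arctan (sinh y)"
definition t1 :: "real \<Rightarrow> real" where "t1 y = sinh y / cosh y"
definition q1 :: "real \<Rightarrow> real" where "q1 y = sinh y / (cosh y)^2"
definition sc1 :: "real \<Rightarrow> real" where "sc1 y = sinh y * cosh y"
definition s31 :: "real \<Rightarrow> real" where "s31 y = (sinh y)^3"

lemma at1_d[derivative_intros]: "(g has_real_derivative Db) (at x within s) \<Longrightarrow>
  ((\<lambda>x. at1 (g x)) has_real_derivative (1 / cosh (g x)) * Db) (at x within s)"
  unfolding at1_def by (rule DERIV_chain2[OF d_at])
lemma t1_d[derivative_intros]: "(g has_real_derivative Db) (at x within s) \<Longrightarrow>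
  ((\<lambda>x. t1 (g x)) has_real_derivative (1 / (cosh (g x))^2) * Db) (at x within s)"
  unfolding t1_def by (rule DERIV_chain2[OF d_t])
lemma q1_d[derivative_intros]: "(g has_real_derivative Db) (at x within s) \<Longrightarrow>
  ((\<lambda>x. q1 (g x)) has_real_derivative (2 / (cosh (g x))^3 - 1 / cosh (g x)) * Db) (at x within s)"
  unfolding q1_def by (rule DERIV_chain2[OF d_q])
lemma sc1_d[derivative_intros]: "(g has_real_derivative Db) (at x within s) \<Longrightarrow>
  ((\<lambda>x. sc1 (g x)) has_real_derivative (2 * (cosh (g x))^2 - 1) * Db) (at x within s)"
  unfolding sc1_def by (rule DERIV_chain2[OF d_sc])
lemma s31_d[derivative_intros]: "(g has_real_derivative Db) (at x within s) \<Longrightarrow>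
  ((\<lambda>x. s31 (g x)) has_real_derivative (3 * (cosh (g x))^3 - 3 * cosh (g x)) * Db) (at x within s)"
  unfolding s31_def by (rule DERIV_chain2[OF d_s3])

definition hM :: "real \<Rightarrow> real \<Rightarrow> real" where
  "hM c y = 1 / cosh y - 2 * c + c^2 * cosh y"
definition FM :: "real \<Rightarrow> real \<Rightarrow> real" where
  "FM c y = at1 y - 2 * c * y + c^2 * sinh y"
definition hA :: "real \<Rightarrow> real \<Rightarrow> real" where
  "hA c y = (1 / cosh y + 2 * c + c^2 * cosh y - 1 / (cosh y)^3 - 2 * c / (cosh y)^2 - c^2 / cosh y) / 4"
definition FA :: "real \<Rightarrow> real \<Rightarrow> real" where
  "FA c y = (at1 y + 2 * c * y + c^2 * sinh y - (q1 y + at1 y) / 2 - 2 * c * t1 y - c^2 * at1 y) / 4"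
definition hB :: "real \<Rightarrow> real \<Rightarrow> real" where
  "hB c y = 1 / (cosh y)^3 - 6 * c / (cosh y)^2 + 15 * c^2 / cosh y - 20 * c^3 + 15 * c^4 * cosh y
     - 6 * c^5 * (cosh y)^2 + c^6 * (cosh y)^3"
definition FB :: "real \<Rightarrow> real \<Rightarrow> real" where
  "FB c y = (q1 y + at1 y) / 2 - 6 * c * t1 y + 15 * c^2 * at1 y - 20 * c^3 * y + 15 * c^4 * sinh y
     - 6 * c^5 * (y + sc1 y) / 2 + c^6 * (sinh y + s31 y / 3)"

lemma FM_d[derivative_intros]: "(g has_real_derivative Db) (at x within s) \<Longrightarrow>
  ((\<lambda>x. FM c (g x)) has_real_derivative hM c (g x) * Db) (at x within s)"
  unfolding FM_def hM_def
  by (auto intro!: derivative_eq_intros) (simp_all add: algebra_simps)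
lemma FA_d[derivative_intros]: "(g has_real_derivative Db) (at x within s) \<Longrightarrow>
  ((\<lambda>x. FA c (g x)) has_real_derivative hA c (g x) * Db) (at x within s)"
  unfolding FA_def hA_def
  by (auto intro!: derivative_eq_intros) (simp_all add: algebra_simps diff_divide_distrib add_divide_distrib)
lemma FB_d[derivative_intros]: "(g has_real_derivative Db) (at x within s) \<Longrightarrow>
  ((\<lambda>x. FB c (g x)) has_real_derivative hB c (g x) * Db) (at x within s)"
  unfolding FB_def hB_def
  by (auto intro!: derivative_eq_intros) (simp_all add: algebra_simps diff_divide_distrib add_divide_distrib)

definition vv :: "real \<Rightarrow> real \<Rightarrow> real" where
  "vv c y = 1 / sqrt (cosh y) - c * sqrt (cosh y)"
definition vd :: "real \<Rightarrow> real \<Rightarrow> real" where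
  "vd c y = - sinh y * (1 / cosh y + c) / (2 * sqrt (cosh y))"

lemma vv_d[derivative_intros]: "(g has_real_derivative Db) (at x within s) \<Longrightarrow>
  ((\<lambda>x. vv c (g x)) has_real_derivative vd c (g x) * Db) (at x within s)"
proof -
  assume D: "(g has_real_derivative Db) (at x within s)"
  have cp: "cosh (g x) > 0" by simp
  have sq: "sqrt (cosh (g x)) > 0" by simp
  have e: "sqrt (cosh (g x)) * sqrt (cosh (g x)) = cosh (g x)" by simp
  show ?thesis unfolding vv_def vd_def
    apply (rule DERIV_cong)
     apply (use D in \<open>auto intro!: derivative_eq_intros\<close>)
    using cp sq e apply (auto simp add: field_simps inverse_eq_divide)
    done
qed

lemma alg_A: "(C::real) > 0 \<Longrightarrow> (C^2 - 1) * (1 / C + c)^2 / (4 * C) =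
   (1 / C + 2 * c + c^2 * C - 1 / C^3 - 2 * c / C^2 - c^2 / C) / 4"
  by (simp add: field_simps) algebra

lemma alg_B: "(C::real) > 0 \<Longrightarrow> (1 / C - 2 * c + c^2 * C)^3 =
   1 / C^3 - 6 * c / C^2 + 15 * c^2 / C - 20 * c^3 + 15 * c^4 * C - 6 * c^5 * C^2 + c^6 * C^3"
  by (simp add: field_simps) algebra

lemma vv_sq: "(vv c y)^2 = hM c y"
proof -
  have cp: "cosh y > 0" by simp
  have e: "sqrt (cosh y)^2 = cosh y" by simp
  show ?thesis unfolding vv_def hM_def using cp e
    by (simp add: field_simps power2_eq_square)
qed

lemma vd_sq: "(vd c y)^2 = hA c y"
proof -
  have cp: "cosh y > 0" by simp
  have e: "sqrt (cosh y)^2 = cosh y" by simp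
  have s: "(sinh y)^2 = (cosh y)^2 - 1" using cs[of y] by simp
  have "(vd c y)^2 = (sinh y)^2 * (1 / cosh y + c)^2 / (4 * (sqrt (cosh y))^2)"
    unfolding vd_def by (simp add: power_divide power_mult_distrib)
  also have "... = ((cosh y)^2 - 1) * (1 / cosh y + c)^2 / (4 * cosh y)" using e s by simp
  also have "... = hA c y" unfolding hA_def by (rule alg_A[OF cp])
  finally show ?thesis .
qed

lemma vv_6: "(vv c y)^6 = hB c y"
proof -
  have cp: "cosh y > 0" by simp
  have "(vv c y)^6 = ((vv c y)^2)^3" by simp
  also have "... = (hM c y)^3" by (simp add: vv_sq)
  also have "... = hB c y" unfolding hM_def hB_def by (rule alg_B[OF cp])
  finally show ?thesis .
qed

lemma vv_T: "vv (1 / cosh T) T = 0" "vv (1 / cosh T) (-T) = 0"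
proof -
  have cp: "cosh T > 0" by simp
  have e: "sqrt (cosh T) * sqrt (cosh T) = cosh T" by simp
  show "vv (1 / cosh T) T = 0" unfolding vv_def using cp e
    by (simp add: field_simps)
  then show "vv (1 / cosh T) (-T) = 0" unfolding vv_def by simp
qed

lemma lim_M: "((\<lambda>T. FM (1 / cosh T) T - FM (1 / cosh T) (-T)) \<longlongrightarrow> pi) at_top"
  unfolding FM_def at1_def by real_asymp
lemma lim_A: "((\<lambda>T. FA (1 / cosh T) T - FA (1 / cosh T) (-T)) \<longlongrightarrow> pi/8) at_top"
  unfolding FA_def at1_def q1_def t1_def by real_asymp
lemma lim_B: "((\<lambda>T. FB (1 / cosh T) T - FB (1 / cosh T) (-T)) \<longlongrightarrow> pi/2) at_top"
  unfolding FB_def at1_def q1_def t1_def sc1_def s31_def by real_asymp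


lemma lint_ftc:
  fixes f F :: "real \<Rightarrow> real"
  assumes "a \<le> b" "\<And>x. (F has_real_derivative f x) (at x)" "continuous_on {a..b} f"
  shows "set_integrable lborel {a..b} f" "(LINT x:{a..b}|lborel. f x) = F b - F a"
proof -
  show "set_integrable lborel {a..b} f"
    unfolding set_integrable_def by (rule borel_integrable_compact) (auto intro: assms)
  have "integral\<^sup>L lborel (\<lambda>x. indicator {a .. b} x *\<^sub>R f x) = F b - F a"
    apply (rule integral_FTC_atLeastAtMost[OF assms(1) _ assms(3)])
    using assms(2) by (auto simp: has_real_derivative_iff_has_vector_derivative[symmetric]
        intro: has_field_derivative_at_within)
  then show "(LINT x:{a..b}|lborel. f x) = F b - F a"
    by (simp add: set_lebesgue_integral_def)
qed

lemma transfer_cpt: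
  fixes p h :: "real \<Rightarrow> real"
  assumes "0 \<le> \<alpha>" "\<And>x. p x = (if x \<in> {\<alpha>..\<beta>} then h x else 0)"
  shows "(\<lambda>x. indicator {0..} x *\<^sub>R p x) = (\<lambda>x. indicator {\<alpha>..\<beta>} x *\<^sub>R h x)"
  using assms by (auto simp: indicator_def fun_eq_iff)

lemma transfer_cpt':
  fixes p h :: "real \<Rightarrow> real"
  assumes "0 \<le> \<alpha>" "\<And>x. p x = (if x \<in> {\<alpha>..\<beta>} then h x else 0)"
    and "set_integrable lborel {\<alpha>..\<beta>} h"
  shows "set_integrable lborel {0..} p" "(LINT x:{0..}|lborel. p x) = (LINT x:{\<alpha>..\<beta>}|lborel. h x)"
  using assms(3) unfolding set_integrable_def set_lebesgue_integral_def
    transfer_cpt[OF assms(1,2)] by auto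

lemma H1_edge_cpt:
  fixes w w' :: "real \<Rightarrow> real"
  assumes a0: "0 \<le> \<alpha>" and ab: "\<alpha> \<le> \<beta>" and D: "\<And>x. (w has_real_derivative w' x) (at x)"
    and C: "continuous_on UNIV w'" and wa: "w \<alpha> = 0" and wb: "w \<beta> = 0"
    and u: "u = (\<lambda>x. if x \<in> {\<alpha>..\<beta>} then w x else 0)"
    and g: "g = (\<lambda>x. if x \<in> {\<alpha>..\<beta>} then w' x else 0)"
  shows "H1_edge {0..} u g" "u 0 = 0"
    "(LINT x:{0..}|lborel. (u x)^2) = (LINT x:{\<alpha>..\<beta>}|lborel. (w x)^2)"
    "(LINT x:{0..}|lborel. (g x)^2) = (LINT x:{\<alpha>..\<beta>}|lborel. (w' x)^2)"
    "(LINT x:{0..}|lborel. \<bar>u x\<bar>^6) = (LINT x:{\<alpha>..\<beta>}|lborel. (w x)^6)"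
proof -
  have Cw: "continuous_on UNIV w"
    using D by (meson DERIV_isCont continuous_at_imp_continuous_on)
  have i1: "set_integrable lborel {\<alpha>..\<beta>} (\<lambda>x. (w x)^2)"
    unfolding set_integrable_def
    by (rule borel_integrable_compact) (auto intro!: continuous_intros continuous_on_subset[OF Cw])
  have i2: "set_integrable lborel {\<alpha>..\<beta>} (\<lambda>x. (w' x)^2)"
    unfolding set_integrable_def
    by (rule borel_integrable_compact) (auto intro!: continuous_intros continuous_on_subset[OF C])
  have i3: "set_integrable lborel {\<alpha>..\<beta>} (\<lambda>x. (w x)^6)"
    unfolding set_integrable_def
    by (rule borel_integrable_compact) (auto intro!: continuous_intros continuous_on_subset[OF Cw])
  have p1: "\<And>x. (u x)^2 = (if x \<in> {\<alpha>..\<beta>} then (w x)^2 else 0)" using u by auto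
  have p2: "\<And>x. (g x)^2 = (if x \<in> {\<alpha>..\<beta>} then (w' x)^2 else 0)" using g by auto
  have p3: "\<And>x. \<bar>u x\<bar>^6 = (if x \<in> {\<alpha>..\<beta>} then (w x)^6 else 0)" using u
    by (auto simp: power_abs)
  note t1 = transfer_cpt'[OF a0 p1 i1] and t2 = transfer_cpt'[OF a0 p2 i2]
    and t3 = transfer_cpt'[OF a0 p3 i3]
  show u0: "u 0 = 0" using u wa a0 by auto
  show "(LINT x:{0..}|lborel. (u x)^2) = (LINT x:{\<alpha>..\<beta>}|lborel. (w x)^2)" by (rule t1(2))
  show "(LINT x:{0..}|lborel. (g x)^2) = (LINT x:{\<alpha>..\<beta>}|lborel. (w' x)^2)" by (rule t2(2))
  show "(LINT x:{0..}|lborel. \<bar>u x\<bar>^6) = (LINT x:{\<alpha>..\<beta>}|lborel. (w x)^6)" by (rule t3(2))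
  have ftc: "set_integrable lborel {0..x} g \<and> u x = u 0 + (LINT t:{0..x}|lborel. g t)"
    if x: "x \<in> {0..}" for x
  proof (cases "x < \<alpha>")
    case True
    have z: "(\<lambda>t. indicator {0..x} t *\<^sub>R g t) = (\<lambda>t. 0)"
      using True g by (auto simp: fun_eq_iff indicator_def)
    show ?thesis using True u u0
      unfolding set_integrable_def set_lebesgue_integral_def z by auto
  next
    case False
    let ?m = "min x \<beta>"
    have z: "(\<lambda>t. indicator {0..x} t *\<^sub>R g t) = (\<lambda>t. indicator {\<alpha>..?m} t *\<^sub>R w' t)"
      using False g a0 by (auto simp: fun_eq_iff indicator_def)
    have am: "\<alpha> \<le> ?m" using False ab by auto
    note L = lint_ftc[OF am D continuous_on_subset[OF C]]
    have "(LINT t:{\<alpha>..?m}|lborel. w' t) = w ?m" using L(2) wa by simp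
    moreover have "w ?m = u x" using False u wb by (auto simp: min_def)
    ultimately show ?thesis using L(1) u0
      unfolding set_integrable_def set_lebesgue_integral_def z by auto
  qed
  show "H1_edge {0..} u g"
    unfolding H1_edge_def using t1(1) t2(1) ftc by blast
qed

lemma finite_edges: "finite (edges G)" unfolding edges_def by auto

lemma H1_edge_zero: "H1_edge D (\<lambda>_. 0) (\<lambda>_. 0)"
  unfolding H1_edge_def set_integrable_def by simp

lemma graph_single:
  assumes j0: "j0 < n_half G" and H: "H1_edge {0..} u0 g0" and z: "u0 0 = 0"
    and U: "U = (\<lambda>k. if k = Inr j0 then u0 else (\<lambda>_. 0))"
    and Gd: "Gd = (\<lambda>k. if k = Inr j0 then g0 else (\<lambda>_. 0))"
  shows "H1 G U Gd" "L2sq G U = (LINT x:{0..}|lborel. (u0 x)^2)"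
    "L2sq G Gd = (LINT x:{0..}|lborel. (g0 x)^2)"
    "L6pow G U = (LINT x:{0..}|lborel. \<bar>u0 x\<bar>^6)"
proof -
  have j0e: "Inr j0 \<in> edges G" using j0 unfolding edges_def by auto
  have ed: "edom G (Inr j0) = {0..}" unfolding edom_def by simp
  show "H1 G U Gd" unfolding H1_def
  proof (intro conjI ballI exI[of _ "\<lambda>_. 0"])
    fix k assume "k \<in> edges G"
    show "H1_edge (edom G k) (U k) (Gd k)"
      using H H1_edge_zero ed U Gd by (cases "k = Inr j0") auto
  qed (use U z in auto)
  have sum1: "sum f (edges G) = f (Inr j0)" if "\<And>k. k \<noteq> Inr j0 \<Longrightarrow> f k = 0" for f :: "nat + nat \<Rightarrow> real"
  proof -
    have "sum f (edges G) = (\<Sum>k\<in>edges G. if k = Inr j0 then f (Inr j0) else 0)"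
      using that by (intro sum.cong) auto
    also have "... = f (Inr j0)" using j0e finite_edges by (simp add: sum.delta')
    finally show ?thesis .
  qed
  show "L2sq G U = (LINT x:{0..}|lborel. (u0 x)^2)"
    unfolding L2sq_def by (subst sum1) (auto simp: U ed)
  show "L2sq G Gd = (LINT x:{0..}|lborel. (g0 x)^2)"
    unfolding L2sq_def by (subst sum1) (auto simp: Gd ed)
  show "L6pow G U = (LINT x:{0..}|lborel. \<bar>u0 x\<bar>^6)"
    unfolding L6pow_def by (subst sum1) (auto simp: U ed)
qed

definition Mf :: "real \<Rightarrow> real" where "Mf T = FM (1 / cosh T) T - FM (1 / cosh T) (-T)"
definition Af :: "real \<Rightarrow> real" where "Af T = FA (1 / cosh T) T - FA (1 / cosh T) (-T)"
definition Bf :: "real \<Rightarrow> real" where "Bf T = FB (1 / cosh T) T - FB (1 / cosh T) (-T)"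

lemma sq1: "(a * vv c y)^2 = a^2 * hM c y" by (simp add: power_mult_distrib vv_sq)
lemma sq2: "(a * (vd c y * l))^2 = a^2 * l^2 * hA c y" by (simp add: power_mult_distrib vd_sq)
lemma sq6: "(a * vv c y)^6 = a^6 * hB c y" by (simp add: power_mult_distrib vv_6)

lemma test_family:
  assumes T: "T > 0" and lpos: "l > 0" and j0: "j0 < n_half G"
  shows "\<exists>U Gd. H1 G U Gd \<and> L2sq G U = a^2 * Mf T / l \<and> L2sq G Gd = a^2 * l * Af T
     \<and> L6pow G U = a^6 * Bf T / l"
proof -
  define c where "c = 1 / cosh T"
  define w where "w = (\<lambda>x. a * vv c (l * x - T))"
  define w' where "w' = (\<lambda>x. a * (vd c (l * x - T) * l))"
  define \<beta> where "\<beta> = 2 * T / l"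
  have lb: "l * \<beta> - T = T" using lpos unfolding \<beta>_def by simp
  have D: "(w has_real_derivative w' x) (at x)" for x
    unfolding w_def w'_def by (auto intro!: derivative_eq_intros)
  have C: "continuous_on UNIV w'"
    unfolding w'_def vd_def by (auto intro!: continuous_intros simp: add_pos_nonneg)
  have ab: "0 \<le> \<beta>" using T lpos unfolding \<beta>_def by simp
  have wa: "w 0 = 0" unfolding w_def c_def using vv_T by simp
  have wb: "w \<beta> = 0" unfolding w_def c_def using vv_T lb by simp
  define u0 where "u0 = (\<lambda>x. if x \<in> {0..\<beta>} then w x else 0)"
  define g0 where "g0 = (\<lambda>x. if x \<in> {0..\<beta>} then w' x else 0)"
  note E = H1_edge_cpt[OF order_refl ab D C wa wb u0_def g0_def]
  define U where "U = (\<lambda>k::nat+nat. if k = Inr j0 then u0 else (\<lambda>_. 0))"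
  define Gd where "Gd = (\<lambda>k::nat+nat. if k = Inr j0 then g0 else (\<lambda>_. 0))"
  note S = graph_single[OF j0 E(1) E(2) U_def Gd_def]
  have I1: "(LINT x:{0..\<beta>}|lborel. (w x)^2) = a^2 * Mf T / l"
  proof -
    have "(LINT x:{0..\<beta>}|lborel. (w x)^2) = a^2 * FM c (l * \<beta> - T) / l - a^2 * FM c (l * 0 - T) / l"
    proof (rule lint_ftc(2)[OF ab])
      show "continuous_on {0..\<beta>} (\<lambda>x. (w x)^2)"
        using D by (intro continuous_intros) (meson DERIV_isCont continuous_at_imp_continuous_on)
      fix x show "((\<lambda>x. a^2 * FM c (l * x - T) / l) has_real_derivative (w x)^2) (at x)"
        apply (rule derivative_eq_intros refl)+
        using lpos unfolding w_def sq1 by (simp_all add: field_simps)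
    qed
    then show ?thesis using lb unfolding Mf_def c_def by (simp add: diff_divide_distrib algebra_simps)
  qed
  have I2: "(LINT x:{0..\<beta>}|lborel. (w' x)^2) = a^2 * l * Af T"
  proof -
    have "(LINT x:{0..\<beta>}|lborel. (w' x)^2) = a^2 * l * FA c (l * \<beta> - T) - a^2 * l * FA c (l * 0 - T)"
    proof (rule lint_ftc(2)[OF ab])
      show "continuous_on {0..\<beta>} (\<lambda>x. (w' x)^2)"
        using C by (intro continuous_intros) (auto intro: continuous_on_subset)
      fix x show "((\<lambda>x. a^2 * l * FA c (l * x - T)) has_real_derivative (w' x)^2) (at x)"
        apply (rule derivative_eq_intros refl)+
        using lpos unfolding w'_def sq2 by (simp_all add: field_simps power2_eq_square)
    qed
    then show ?thesis using lb unfolding Af_def c_def by (simp add: algebra_simps)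
  qed
  have I3: "(LINT x:{0..\<beta>}|lborel. (w x)^6) = a^6 * Bf T / l"
  proof -
    have "(LINT x:{0..\<beta>}|lborel. (w x)^6) = a^6 * FB c (l * \<beta> - T) / l - a^6 * FB c (l * 0 - T) / l"
    proof (rule lint_ftc(2)[OF ab])
      show "continuous_on {0..\<beta>} (\<lambda>x. (w x)^6)"
        using D by (intro continuous_intros) (meson DERIV_isCont continuous_at_imp_continuous_on)
      fix x show "((\<lambda>x. a^6 * FB c (l * x - T) / l) has_real_derivative (w x)^6) (at x)"
        apply (rule derivative_eq_intros refl)+
        using lpos unfolding w_def sq6 by (simp_all add: field_simps)
    qed
    then show ?thesis using lb unfolding Bf_def c_def by (simp add: diff_divide_distrib algebra_simps)
  qed
  show ?thesis
    apply (rule exI[of _ U], rule exI[of _ Gd])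
    using S E I1 I2 I3 by simp
qed


lemma edom_sets: "edom G k \<in> sets lborel"
  unfolding edom_def by (cases k) auto

lemma sq_int_nonneg: "0 \<le> (LINT x:D|lborel. (f x)^2)" for f :: "real \<Rightarrow> real"
  unfolding set_lebesgue_integral_def
  by (rule integral_nonneg_AE) (auto simp: indicator_def)

lemma L2sq_nonneg: "0 \<le> L2sq G u"
  unfolding L2sq_def by (intro sum_nonneg sq_int_nonneg)

lemma L6pow_nonneg: "0 \<le> L6pow G u"
  unfolding L6pow_def set_lebesgue_integral_def
  by (intro sum_nonneg integral_nonneg_AE) (auto simp: indicator_def)

lemma Ici_infinite: "emeasure lborel {0::real..} = \<infinity>"
proof (rule ccontr)
  assume "emeasure lborel {0::real..} \<noteq> \<infinity>"
  then obtain r where r: "emeasure lborel {0::real..} = ennreal r" "0 \<le> r"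
    by (cases "emeasure lborel {0::real..}") auto
  have "emeasure lborel {0::real..r+1} \<le> emeasure lborel {0::real..}"
    by (intro emeasure_mono) auto
  then have "ennreal (r + 1) \<le> ennreal r" using r by simp
  then show False using r by (simp add: ennreal_le_iff)
qed

lemma const_sq_int: "set_integrable lborel {0::real..} (\<lambda>x. c^2) \<Longrightarrow> c = (0::real)"
proof -
  assume "set_integrable lborel {0::real..} (\<lambda>x. c^2)"
  then have "integrable lborel (\<lambda>x. indicator {0::real..} x * c^2)"
    unfolding set_integrable_def by simp
  then have "c = 0 \<or> integrable lborel (indicator {0::real..} :: real \<Rightarrow> real)"
    by simp
  then show "c = 0" using Ici_infinite by (auto simp: integrable_indicator_iff)
qed

lemma zero_grad_edge:
  fixes D :: "real set"
  assumes H: "H1_edge D f g" and z: "(LINT x:D|lborel. (g x)^2) = 0" and DS: "D \<in> sets lborel"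
    and sub: "\<And>x. x \<in> D \<Longrightarrow> {0..x} \<subseteq> D"
  shows "\<And>x. x \<in> D \<Longrightarrow> f x = f 0"
proof -
  have i: "integrable lborel (\<lambda>x. indicator D x *\<^sub>R (g x)^2)"
    using H unfolding H1_edge_def set_integrable_def by blast
  have "AE x in lborel. indicator D x *\<^sub>R (g x)^2 = 0"
    using z i unfolding set_lebesgue_integral_def
    by (subst integral_nonneg_eq_0_iff_AE[symmetric]) (auto simp: indicator_def)
  then have ae: "AE x in lborel. x \<in> D \<longrightarrow> g x = 0"
    by eventually_elim (auto simp: indicator_def split: if_splits)
  fix x assume x: "x \<in> D"
  have "(LINT t:{0..x}|lborel. g t) = 0"
    unfolding set_lebesgue_integral_def
  proof (rule integral_eq_zero_AE)
    show "AE t in lborel. indicator {0..x} t *\<^sub>R g t = 0"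
      using ae proof eventually_elim
      case (elim t) then show ?case using sub[OF x] by (auto simp: indicator_def)
    qed
  qed
  then show "f x = f 0" using H x unfolding H1_edge_def by auto
qed

lemma zero_grad:
  assumes wf: "wf_mgraph G" and con: "connected_mgraph G" and nc: "noncompact_mgraph G"
    and H: "H1 G u g" and z: "L2sq G g = 0"
  shows "L2sq G u = 0"
proof -
  have each: "(LINT x:edom G k|lborel. (g k x)^2) = 0" if k: "k \<in> edges G" for k
    using z k finite_edges sum_nonneg_eq_0_iff[of "edges G" "\<lambda>k. LINT x:edom G k|lborel. (g k x)^2"]
      sq_int_nonneg unfolding L2sq_def by blast
  have sub: "\<And>x. x \<in> edom G k \<Longrightarrow> {0..x} \<subseteq> edom G k" for k
    unfolding edom_def by (cases k) auto
  have He: "H1_edge (edom G k) (u k) (g k)" if "k \<in> edges G" for k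
    using H that unfolding H1_def by blast
  have const: "u k x = u k 0" if "k \<in> edges G" "x \<in> edom G k" for k x
    using zero_grad_edge[OF He[OF that(1)] each[OF that(1)] edom_sets sub that(2)] .
  obtain \<phi> where phi1: "\<And>e. e < n_bdd G \<Longrightarrow> u (Inl e) 0 = \<phi> (b_src G e) \<and> u (Inl e) (b_len G e) = \<phi> (b_tgt G e)"
    and phi2: "\<And>j. j < n_half G \<Longrightarrow> u (Inr j) 0 = \<phi> (h_vert G j)"
    using H unfolding H1_def by blast
  have hz: "u (Inr j) 0 = 0" if j: "j < n_half G" for j
  proof -
    have kj: "Inr j \<in> edges G" using j unfolding edges_def by auto
    have ed: "edom G (Inr j) = {0..}" unfolding edom_def by simp
    have i: "integrable lborel (\<lambda>x. indicator {0::real..} x *\<^sub>R (u (Inr j) x)^2)"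
      using He[OF kj] ed unfolding H1_edge_def set_integrable_def by simp
    have "integrable lborel (\<lambda>x. indicator {0::real..} x *\<^sub>R (u (Inr j) 0)^2)"
    proof (rule Bochner_Integration.integrable_cong[THEN iffD1, OF refl _ i])
      fix x :: real
      have "x \<in> {0..} \<Longrightarrow> u (Inr j) x = u (Inr j) 0" using const[OF kj, of x] ed by metis
      then show "indicator {0..} x *\<^sub>R (u (Inr j) x)^2 = indicator {0..} x *\<^sub>R (u (Inr j) 0)^2"
        by (cases "x \<in> {0..}") auto
    qed
    then show ?thesis using const_sq_int unfolding set_integrable_def by blast
  qed
  have edge_eq: "\<phi> (b_src G e) = \<phi> (b_tgt G e)" if e: "e < n_bdd G" for e
  proof -
    have ke: "Inl e \<in> edges G" using e unfolding edges_def by auto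
    have "b_len G e \<in> edom G (Inl e)" using wf e unfolding edom_def wf_mgraph_def by auto
    then have "u (Inl e) (b_len G e) = u (Inl e) 0" using const[OF ke] by blast
    then show ?thesis using phi1[OF e] by simp
  qed
  have adj_eq: "\<phi> a = \<phi> b" if "(a, b) \<in> adj G" for a b
    using that edge_eq unfolding adj_def by auto
  have rt: "\<phi> a = \<phi> b" if "(a, b) \<in> (adj G)\<^sup>*" for a b
    using that by (induction rule: rtrancl_induct) (auto dest: adj_eq)
  have n0: "0 < n_half G" using nc unfolding noncompact_mgraph_def .
  have v0: "h_vert G 0 < n_vert G" using wf n0 unfolding wf_mgraph_def by auto
  have pv0: "\<phi> (h_vert G 0) = 0" using hz[OF n0] phi2[OF n0] by simp
  have pz: "\<phi> v = 0" if "v < n_vert G" for v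
    using rt[of v "h_vert G 0"] con that v0 pv0 unfolding connected_mgraph_def by auto
  have uz: "u k x = 0" if k: "k \<in> edges G" and x: "x \<in> edom G k" for k x
  proof -
    have "u k x = u k 0" using const[OF k x] .
    moreover have "u k 0 = 0"
    proof (cases k)
      case (Inl e)
      then have e: "e < n_bdd G" using k unfolding edges_def by auto
      then show ?thesis using Inl phi1[OF e] pz wf unfolding wf_mgraph_def by auto
    next
      case (Inr j)
      then have j: "j < n_half G" using k unfolding edges_def by auto
      then show ?thesis using Inr hz by auto
    qed
    ultimately show ?thesis by simp
  qed
  show ?thesis unfolding L2sq_def
  proof (intro sum.neutral ballI)
    fix k assume k: "k \<in> edges G"
    have "(LINT x:edom G k|lborel. (u k x)^2) = (LINT x:edom G k|lborel. 0)"
      by (rule set_lebesgue_integral_cong[OF edom_sets]) (auto simp: uz[OF k])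
    then show "(LINT x:edom G k|lborel. (u k x)^2) = 0" by (simp add: set_lebesgue_integral_def)
  qed
qed

lemma scale_edge:
  assumes H: "H1_edge D f g"
  shows "H1_edge D (\<lambda>x. s * f x) (\<lambda>x. s * g x)"
proof -
  have e1: "(\<lambda>x. (s * f x)^2) = (\<lambda>x. s^2 * (f x)^2)" by (simp add: power_mult_distrib)
  have e2: "(\<lambda>x. (s * g x)^2) = (\<lambda>x. s^2 * (g x)^2)" by (simp add: power_mult_distrib)
  show ?thesis using H unfolding H1_edge_def e1 e2
    by (auto simp: algebra_simps)
qed

lemma scale_H1:
  assumes "H1 G u g"
  shows "H1 G (\<lambda>k x. s * u k x) (\<lambda>k x. s * g k x)"
proof -
  obtain \<phi> where "(\<forall>e<n_bdd G. u (Inl e) 0 = \<phi> (b_src G e) \<and> u (Inl e) (b_len G e) = \<phi> (b_tgt G e)) \<and>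
        (\<forall>j<n_half G. u (Inr j) 0 = \<phi> (h_vert G j))" using assms unfolding H1_def by blast
  then show ?thesis using assms scale_edge unfolding H1_def
    by (intro conjI ballI exI[of _ "\<lambda>v. s * \<phi> v"]) auto
qed

lemma scale_L2: "L2sq G (\<lambda>k x. s * u k x) = s^2 * L2sq G u"
  unfolding L2sq_def by (simp add: power_mult_distrib sum_distrib_left)

lemma scale_L6: "L6pow G (\<lambda>k x. s * u k x) = s^6 * L6pow G u"
proof -
  have "\<bar>s * y\<bar>^6 = s^6 * \<bar>y\<bar>^6" for y :: real
    by (simp add: abs_mult power_mult_distrib power_even_abs_numeral)
  then show ?thesis unfolding L6pow_def by (simp add: sum_distrib_left)
qed


lemma limMf: "(Mf \<longlongrightarrow> pi) at_top" using lim_M unfolding Mf_def[abs_def] .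
lemma limAf: "(Af \<longlongrightarrow> pi/8) at_top" using lim_A unfolding Af_def[abs_def] .
lemma limBf: "(Bf \<longlongrightarrow> pi/2) at_top" using lim_B unfolding Bf_def[abs_def] .

lemma ev_pos: "eventually (\<lambda>T. 0 < T \<and> 0 < Mf T \<and> 0 < Af T \<and> 0 < Bf T) at_top"
proof -
  have "eventually (\<lambda>T. 0 < Mf T) at_top" by (rule order_tendstoD(1)[OF limMf]) simp
  moreover have "eventually (\<lambda>T. 0 < Af T) at_top" by (rule order_tendstoD(1)[OF limAf]) simp
  moreover have "eventually (\<lambda>T. 0 < Bf T) at_top" by (rule order_tendstoD(1)[OF limBf]) simp
  moreover have "eventually (\<lambda>T. 0 < (T::real)) at_top" by (rule eventually_gt_at_top)
  ultimately show ?thesis by eventually_elim auto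
qed

lemma pos_T: "\<exists>T. 0 < T \<and> 0 < Mf T \<and> 0 < Af T \<and> 0 < Bf T"
  using eventually_happens'[OF trivial_limit_at_top_linorder ev_pos] by blast

lemma big_T:
  assumes mu: "pi * sqrt 3 / 2 < \<mu>"
  shows "\<exists>T. 0 < T \<and> 0 < Mf T \<and> 0 < Af T \<and> 0 < \<mu>^2 * Bf T / (3 * (Mf T)^2) - Af T"
proof -
  have l: "((\<lambda>T. \<mu>^2 * Bf T / (3 * (Mf T)^2) - Af T) \<longlongrightarrow> \<mu>^2 * (pi/2) / (3 * pi^2) - pi/8) at_top"
    by (intro tendsto_intros limMf limAf limBf) simp
  have p0: "0 < pi * sqrt 3 / 2" by simp
  have "(pi * sqrt 3 / 2)^2 < \<mu>^2" using mu p0 by (intro power_strict_mono) auto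
  moreover have "(pi * sqrt 3 / 2)^2 = pi^2 * (sqrt 3)^2 / 2^2" by (simp only: power_mult_distrib power_divide)
  moreover have "(sqrt 3)^2 = (3::real)" by simp
  ultimately have "3 * pi^2 / 4 < \<mu>^2" by simp
  then have pos: "0 < \<mu>^2 * (pi/2) / (3 * pi^2) - pi/8"
    using pi_gt_zero by (simp add: field_simps power2_eq_square)
  have "eventually (\<lambda>T. 0 < \<mu>^2 * Bf T / (3 * (Mf T)^2) - Af T) at_top"
    by (rule order_tendstoD(1)[OF l pos])
  with ev_pos have "eventually (\<lambda>T. 0 < T \<and> 0 < Mf T \<and> 0 < Af T \<and> 0 < \<mu>^2 * Bf T / (3 * (Mf T)^2) - Af T) at_top"
    by eventually_elim auto
  then obtain T where "0 < T \<and> 0 < Mf T \<and> 0 < Af T \<and> 0 < \<mu>^2 * Bf T / (3 * (Mf T)^2) - Af T"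
    using eventually_happens'[OF trivial_limit_at_top_linorder] by blast
  then show ?thesis by blast
qed

lemma energy_test:
  assumes T: "0 < T" "0 < Mf T" and l: "0 < l" and mu: "0 < \<mu>" and j0: "j0 < n_half G"
  shows "\<exists>U Gd. H1 G U Gd \<and> L2sq G U = \<mu> \<and>
     energy G U Gd = l^2 * (\<mu> * Af T / (2 * Mf T) - \<mu>^3 * Bf T / (6 * (Mf T)^3))"
proof -
  define a where "a = sqrt (\<mu> * l / Mf T)"
  have a2: "a^2 = \<mu> * l / Mf T" unfolding a_def using T l mu by simp
  have a6: "a^6 = (\<mu> * l / Mf T)^3" proof -
    have "a^6 = (a^2)^3" by (simp flip: power_mult)
    then show ?thesis using a2 by simp
  qed
  obtain U Gd where H: "H1 G U Gd" "L2sq G U = a^2 * Mf T / l" "L2sq G Gd = a^2 * l * Af T"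
     "L6pow G U = a^6 * Bf T / l" using test_family[OF T(1) l j0] by blast
  show ?thesis
  proof (intro exI conjI)
    show "H1 G U Gd" by fact
    show "L2sq G U = \<mu>" using H(2) a2 T l by simp
    show "energy G U Gd = l^2 * (\<mu> * Af T / (2 * Mf T) - \<mu>^3 * Bf T / (6 * (Mf T)^3))"
      unfolding energy_def H(3,4) a2 a6 using T l by (simp add: field_simps power2_eq_square power3_eq_cube)
  qed
qed

lemma GL_le:
  assumes "H1 G u g" "L2sq G u = \<mu>"
  shows "ground_level G \<mu> \<le> ereal (energy G u g)"
  unfolding ground_level_def
  using assms by (intro INF_lower2[of "(u, g)"]) auto

lemma K_pos:
  assumes j0: "0 < n_half G"
  shows "0 < GN_const G"
proof -
  obtain T where T: "0 < T" "0 < Mf T" "0 < Af T" "0 < Bf T" using pos_T by blast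
  obtain U Gd where H: "H1 G U Gd" "L2sq G U = 1^2 * Mf T / 1" "L2sq G Gd = 1^2 * 1 * Af T"
     "L6pow G U = 1^6 * Bf T / 1" using test_family[OF T(1) zero_less_one j0, of 1] by blast
  have "ereal (L6pow G U / ((L2sq G U)^2 * L2sq G Gd)) \<le> GN_const G"
    unfolding GN_const_def using H T by (intro SUP_upper2[of "(U, Gd)"]) auto
  moreover have "0 < L6pow G U / ((L2sq G U)^2 * L2sq G Gd)" using H T by simp
  ultimately show ?thesis by (meson ereal_less(2) less_le_trans)
qed

lemma K_bound:
  assumes K: "GN_const G = ereal k" and H: "H1 G u g" and m: "0 < L2sq G u"
  shows "L6pow G u / ((L2sq G u)^2 * L2sq G g) \<le> k"
proof -
  have "ereal (L6pow G u / ((L2sq G u)^2 * L2sq G g)) \<le> GN_const G"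
    unfolding GN_const_def using H m by (intro SUP_upper2[of "(u, g)"]) auto
  then show ?thesis using K by simp
qed

theorem proposition7p1:
  fixes G :: mgraph and \<mu> :: real
  assumes "wf_mgraph G" and "connected_mgraph G" and "noncompact_mgraph G"
    and "0 < \<mu>"
  shows "(\<mu> \<le> crit_mass G \<longrightarrow> ground_level G \<mu> = 0)
       \<and> (\<mu> < crit_mass G \<longrightarrow> \<not> ground_level_attained G \<mu>)
       \<and> (crit_mass G < \<mu> \<longrightarrow> ground_level G \<mu> < 0)
       \<and> (pi * sqrt 3 / 2 < \<mu> \<longrightarrow> ground_level G \<mu> = -\<infinity>)"
proof -
  note wf = assms(1) and con = assms(2) and nc = assms(3) and mu = assms(4)
  have j0: "0 < n_half G" using nc unfolding noncompact_mgraph_def .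
  have Kp: "0 < GN_const G" by (rule K_pos[OF j0])
  have Kc: "GN_const G = \<infinity> \<or> (\<exists>k>0. GN_const G = ereal k)"
    using Kp by (cases "GN_const G") auto
  have gpos: "0 < L2sq G g" if "H1 G u g" "L2sq G u = \<mu>" for u g
  proof -
    have "L2sq G g \<noteq> 0" using zero_grad[OF wf con nc that(1)] that(2) mu by auto
    then show ?thesis using L2sq_nonneg[of G g] by simp
  qed
  have lowb: "0 \<le> energy G u g" if k: "GN_const G = ereal k" "k * \<mu>^2 \<le> 3" and H: "H1 G u g" "L2sq G u = \<mu>" for k u g
  proof -
    have g: "0 < L2sq G g" by (rule gpos[OF H])
    have "L6pow G u / (\<mu>^2 * L2sq G g) \<le> k" using K_bound[OF k(1) H(1)] H(2) mu by simp
    then have "L6pow G u \<le> k * \<mu>^2 * L2sq G g" using g mu by (simp add: field_simps)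
    also have "... \<le> 3 * L2sq G g" using k(2) g by (intro mult_right_mono) auto
    finally show ?thesis unfolding energy_def by simp
  qed
  have kof: "\<exists>k>0. GN_const G = ereal k \<and> k * \<mu>^2 \<le> 3 \<and> (\<mu> < crit_mass G \<longrightarrow> k * \<mu>^2 < 3)"
    if le: "\<mu> \<le> crit_mass G"
  proof -
    have cp: "0 < crit_mass G" using le mu by simp
    obtain k where k: "k > 0" "GN_const G = ereal k"
    proof (cases "GN_const G = \<infinity>")
      case True
      then have "crit_mass G = 0" unfolding crit_mass_def by simp
      then show ?thesis using cp by simp
    next
      case False
      then show ?thesis using Kc that by blast
    qed
    have cm: "crit_mass G = sqrt (3 / k)" unfolding crit_mass_def k(2) by simp
    have "\<mu>^2 \<le> (sqrt (3 / k))^2" using le unfolding cm using mu by (intro power_mono) auto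
    then have "\<mu>^2 \<le> 3 / k" using k(1) by simp
    then have a: "k * \<mu>^2 \<le> 3" using k(1) by (simp add: field_simps)
    have b: "k * \<mu>^2 < 3" if "\<mu> < crit_mass G"
    proof -
      have "\<mu>^2 < (sqrt (3 / k))^2" using that unfolding cm using mu by (intro power_strict_mono) auto
      then have "\<mu>^2 < 3 / k" using k(1) by simp
      then show ?thesis using k(1) by (simp add: field_simps)
    qed
    show ?thesis using k a b by blast
  qed
  have partI: "ground_level G \<mu> = 0" if le: "\<mu> \<le> crit_mass G"
  proof (rule antisym)
    obtain k where k: "GN_const G = ereal k" "k * \<mu>^2 \<le> 3" using kof[OF le] by blast
    show "0 \<le> ground_level G \<mu>" unfolding ground_level_def
      using lowb[OF k] by (intro INF_greatest) auto
    obtain T where T: "0 < T" "0 < Mf T" "0 < Af T" "0 < Bf T" using pos_T by blast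
    define P where "P = \<mu> * Af T / (2 * Mf T)"
    have Pp: "0 < P" unfolding P_def using T mu by simp
    show "ground_level G \<mu> \<le> 0"
    proof (rule ereal_le_epsilon2)
      fix e :: real assume e: "0 < e"
      define l where "l = sqrt (e / P)"
      have l: "0 < l" "l^2 = e / P" unfolding l_def using e Pp by auto
      obtain U Gd where U: "H1 G U Gd" "L2sq G U = \<mu>"
        "energy G U Gd = l^2 * (\<mu> * Af T / (2 * Mf T) - \<mu>^3 * Bf T / (6 * (Mf T)^3))"
        using energy_test[OF T(1,2) l(1) mu j0] by blast
      have "energy G U Gd \<le> l^2 * P"
        unfolding U(3) P_def using T mu by (intro mult_left_mono) auto
      also have "... = e" using l Pp by simp
      finally have "ereal (energy G U Gd) \<le> 0 + ereal e" by simp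
      then show "ground_level G \<mu> \<le> 0 + ereal e" using GL_le[OF U(1,2)] by (meson order_trans)
    qed
  qed
  have partI2: "\<not> ground_level_attained G \<mu>" if lt: "\<mu> < crit_mass G"
  proof
    assume "ground_level_attained G \<mu>"
    then obtain u g where H: "H1 G u g" "L2sq G u = \<mu>" "ereal (energy G u g) = ground_level G \<mu>"
      unfolding ground_level_attained_def by blast
    have e0: "energy G u g = 0" using H(3) partI lt by simp
    obtain k where k: "GN_const G = ereal k" "k * \<mu>^2 < 3" using kof lt by force
    have g: "0 < L2sq G g" by (rule gpos[OF H(1,2)])
    have "L6pow G u / (\<mu>^2 * L2sq G g) \<le> k" using K_bound[OF k(1) H(1)] H(2) mu by simp
    then have "L6pow G u \<le> k * \<mu>^2 * L2sq G g" using g mu by (simp add: field_simps)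
    also have "... < 3 * L2sq G g" using k(2) g by (intro mult_strict_right_mono) auto
    finally show False using e0 unfolding energy_def by simp
  qed
  have partII: "ground_level G \<mu> < 0" if gt: "crit_mass G < \<mu>"
  proof -
    have "ereal (3 / \<mu>^2) < GN_const G"
    proof (cases "GN_const G = \<infinity>")
      case True then show ?thesis by simp
    next
      case False
      then obtain k where k: "k > 0" "GN_const G = ereal k" using Kc by blast
      have cm: "crit_mass G = sqrt (3 / k)" unfolding crit_mass_def k(2) by simp
      have "(sqrt (3 / k))^2 < \<mu>^2" using gt unfolding cm using k(1) by (intro power_strict_mono) auto
      then have "3 / k < \<mu>^2" using k(1) by simp
      then show ?thesis using k mu by (simp add: field_simps)
    qed
    then obtain u g where H: "H1 G u g" "0 < L2sq G u"
      and r: "3 / \<mu>^2 < L6pow G u / ((L2sq G u)^2 * L2sq G g)"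
      unfolding GN_const_def less_SUP_iff by auto
    define m where "m = L2sq G u"
    have m: "0 < m" using H(2) m_def by simp
    have gnz: "L2sq G g \<noteq> 0" using r mu by (auto)
    have g: "0 < L2sq G g" using gnz L2sq_nonneg[of G g] by simp
    have key: "3 * m^2 * L2sq G g < \<mu>^2 * L6pow G u"
      using r m g mu unfolding m_def[symmetric] by (simp add: field_simps)
    define s where "s = sqrt (\<mu> / m)"
    have s2: "s^2 = \<mu> / m" unfolding s_def using m mu by simp
    have s6: "s^6 = (\<mu> / m)^3"
    proof -
      have "s^6 = (s^2)^3" by (simp flip: power_mult)
      then show ?thesis using s2 by simp
    qed
    let ?u = "\<lambda>k x. s * u k x" and ?g = "\<lambda>k x. s * g k x"
    have H2: "H1 G ?u ?g" by (rule scale_H1[OF H(1)])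
    have M2: "L2sq G ?u = \<mu>" unfolding scale_L2 s2 m_def[symmetric] using m by simp
    have "energy G ?u ?g = (\<mu> / m) * L2sq G g / 2 - (\<mu> / m)^3 * L6pow G u / 6"
      unfolding energy_def scale_L2 scale_L6 s2 s6 by simp
    also have "... = (\<mu> / m) * (3 * m^2 * L2sq G g - \<mu>^2 * L6pow G u) / (6 * m^2)"
      using m by (simp add: field_simps power2_eq_square power3_eq_cube)
    also have "... < 0" using key m mu by (intro divide_neg_pos mult_pos_neg) auto
    finally have "ereal (energy G ?u ?g) < 0" by simp
    then show ?thesis using GL_le[OF H2 M2] by (meson le_less_trans)
  qed
  have partIII: "ground_level G \<mu> = -\<infinity>" if big: "pi * sqrt 3 / 2 < \<mu>"
  proof -
    obtain T where T: "0 < T" "0 < Mf T" "0 < Af T" and D: "0 < \<mu>^2 * Bf T / (3 * (Mf T)^2) - Af T"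
      using big_T[OF big] by blast
    define Q where "Q = \<mu> * (\<mu>^2 * Bf T / (3 * (Mf T)^2) - Af T) / (2 * Mf T)"
    have Qp: "0 < Q" unfolding Q_def using T D mu by simp
    have Qe: "\<mu> * Af T / (2 * Mf T) - \<mu>^3 * Bf T / (6 * (Mf T)^3) = - Q"
      unfolding Q_def using T by (simp add: field_simps power2_eq_square power3_eq_cube)
    have below: "ground_level G \<mu> < ereal r" for r
    proof -
      define l where "l = sqrt ((\<bar>r\<bar> + 1) / Q)"
      have l: "0 < l" "l^2 = (\<bar>r\<bar> + 1) / Q" unfolding l_def using Qp by auto
      obtain U Gd where U: "H1 G U Gd" "L2sq G U = \<mu>"
        "energy G U Gd = l^2 * (\<mu> * Af T / (2 * Mf T) - \<mu>^3 * Bf T / (6 * (Mf T)^3))"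
        using energy_test[OF T(1,2) l(1) mu j0] by blast
      have "energy G U Gd = - (\<bar>r\<bar> + 1)" unfolding U(3) Qe l(2) using Qp by simp
      then have "ereal (energy G U Gd) < ereal r" by simp
      then show ?thesis using GL_le[OF U(1,2)] by (meson le_less_trans)
    qed
    show ?thesis
    proof (cases "ground_level G \<mu>")
      case (real x) then show ?thesis using below[of "x - 1"] by simp
    next
      case PInf then show ?thesis using below[of 0] by simp
    qed simp
  qed
  show ?thesis using partI partI2 partII partIII by blast
qed

end
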